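(* Let $A_1,\dots,A_k$ be $n$-dimensional boxes and $\mathcal{O}$ a set of orders of them (innermost to outermost) each of which would be a possible arrangement if the expansion bound were dropped, i.e. if an expanded side $a_i$ were allowed to take any length $a_i'\ge a_i$. Then there exist $n$-dimensional boxes $A'_1,\dots,A'_k$ such that every order in $\mathcal{O}$ (with corresponding labels) is a possible arrangement with the expansion bound $a_i'\le 2a_i$ in force.
   Context: An $n$-dimensional box $A$ has closed side lengths $a_1\le\dots\le a_n$ (positive reals). A state of $A$ is either closed or expanded along one side $i$: $a_i$ is replaced by $a_i'$ with $a_i\le a_i'$, other sides unchanged (only one side can expand); the expansion bound is the additional requirement $a_i'\le 2a_i$. The dimension vector of a state is its side lengths sorted non-decreasingly. A box in some state fits inside another box in some state if each coordinate of the outer one's dimension vector is strictly larger than the corresponding coordinate of the inner one's. An order $X_1,\dots,X_k$ (innermost to outermost) is a possible arrangement if each box can be given a state so that $X_j$ fits inside $X_{j+1}$ for all $j$; states may differ between arrangements. *)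

theory Defs
  imports Complex_Main
begin

text \<open>An n-dimensional box is given by its closed side lengths a_1 <= ... <= a_n,
  positive reals, represented as a sorted list of length n (index i-1 for side i).\<close>
definition is_box :: "nat \<Rightarrow> real list \<Rightarrow> bool" where
  "is_box n a \<longleftrightarrow> length a = n \<and> sorted a \<and> (\<forall>x\<in>set a. 0 < x)"

definition is_state :: "bool \<Rightarrow> real list \<Rightarrow> real list \<Rightarrow> bool" where
  "is_state bounded a v \<longleftrightarrow>
     v = a \<or>
     (\<exists>i<length a. \<exists>t. a ! i \<le> t \<and> (bounded \<longrightarrow> t \<le> 2 * a ! i) \<and> v = a[i := t])"

definition dim_vec :: "real list \<Rightarrow> real list" where
  "dim_vec v = sort v"

definition fits :: "real list \<Rightarrow> real list \<Rightarrow> bool" where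
  "fits v w \<longleftrightarrow> list_all2 (<) (dim_vec v) (dim_vec w)"

text \<open>An order of the boxes A_0,...,A_(k-1): a list listing each label exactly once,
  innermost first.\<close>
definition is_order :: "nat \<Rightarrow> nat list \<Rightarrow> bool" where
  "is_order k \<sigma> \<longleftrightarrow> distinct \<sigma> \<and> set \<sigma> = {0..<k}"

definition possible_arrangement :: "bool \<Rightarrow> (nat \<Rightarrow> real list) \<Rightarrow> nat list \<Rightarrow> bool" where
  "possible_arrangement bounded A \<sigma> \<longleftrightarrow>
     (\<exists>st :: nat \<Rightarrow> real list.
        (\<forall>j<length \<sigma>. is_state bounded (A (\<sigma> ! j)) (st j)) \<and>
        (\<forall>j. Suc j < length \<sigma> \<longrightarrow> fits (st j) (st (Suc j))))"

end

theory Submission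
  imports Defs "HOL-Library.Multiset"
begin

definition ff :: "real \<Rightarrow> real" where
  "ff x = 3/2 + arctan x / pi"

lemma ff_less_iff: "ff x < ff y \<longleftrightarrow> x < y"
proof -
  have "arctan x / pi < arctan y / pi \<longleftrightarrow> arctan x < arctan y"
    using pi_gt_zero by (simp add: divide_less_cancel)
  then show ?thesis unfolding ff_def using arctan_less_iff[of x y] by simp
qed

lemma ff_le_iff: "ff x \<le> ff y \<longleftrightarrow> x \<le> y"
  using ff_less_iff[of y x] by linarith

lemma ff_bounds: "1 < ff x \<and> ff x < 2"
proof -
  have "-(pi/2) < arctan x" "arctan x < pi/2" using arctan_bounded by auto
  then have "-(1/2) < arctan x / pi" "arctan x / pi < 1/2"
    using pi_gt_zero by (simp_all add: field_simps)
  then show ?thesis unfolding ff_def by linarith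
qed

lemma sort_map_ff: "sort (map ff xs) = map ff (sort xs)"
proof (rule properties_for_sort)
  show "mset (map ff (sort xs)) = mset (map ff xs)" by simp
  have "mono ff" by (simp add: mono_def ff_le_iff)
  then show "sorted (map ff (sort xs))"
    by (simp add: sorted_map ff_le_iff)
qed

lemma fits_ff: "fits (map ff v) (map ff w) \<longleftrightarrow> fits v w"
  unfolding fits_def dim_vec_def sort_map_ff
  by (simp add: list_all2_map1 list_all2_map2 ff_less_iff)

lemma state_ff:
  assumes "is_state False a v"
  shows "is_state True (map ff a) (map ff v)"
proof -
  have "v = a \<or> (\<exists>i<length a. \<exists>t. a ! i \<le> t \<and> v = a[i := t])"
    using assms unfolding is_state_def by simp
  then show ?thesis
  proof (elim disjE exE conjE)
  assume "v = a" then show ?thesis by (simp add: is_state_def)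
next
  fix i t assume i: "i < length a" and t: "a ! i \<le> t" and v: "v = a[i := t]"
  have "ff (a!i) \<le> ff t" using t by (simp add: ff_le_iff)
  moreover have "ff t \<le> 2 * ff (a!i)" using ff_bounds[of t] ff_bounds[of "a!i"] by linarith
  ultimately show ?thesis using i v
    unfolding is_state_def
    by (intro disjI2 exI[of _ i] conjI exI[of _ "ff t"]) (auto simp: map_update)
qed
qed

lemma is_box_ff: "is_box n a \<Longrightarrow> is_box n (map ff a)"
  unfolding is_box_def using ff_bounds
  by (auto simp: sorted_map ff_le_iff intro: less_trans[OF zero_less_one])

theorem proposition25:
  fixes n k :: nat and A :: "nat \<Rightarrow> real list" and \<O> :: "nat list set"
  assumes "\<forall>i<k. is_box n (A i)"
    and "\<forall>\<sigma>\<in>\<O>. is_order k \<sigma> \<and> possible_arrangement False A \<sigma>"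
  shows "\<exists>A' :: nat \<Rightarrow> real list. (\<forall>i<k. is_box n (A' i)) \<and>
           (\<forall>\<sigma>\<in>\<O>. possible_arrangement True A' \<sigma>)"
proof (intro exI[of _ "\<lambda>i. map ff (A i)"] conjI ballI allI impI)
  fix i assume "i < k" then show "is_box n (map ff (A i))" using assms(1) is_box_ff by blast
next
  fix \<sigma> assume "\<sigma> \<in> \<O>"
  then obtain st where st: "\<forall>j<length \<sigma>. is_state False (A (\<sigma> ! j)) (st j)"
    "\<forall>j. Suc j < length \<sigma> \<longrightarrow> fits (st j) (st (Suc j))"
    using assms(2) unfolding possible_arrangement_def by blast
  show "possible_arrangement True (\<lambda>i. map ff (A i)) \<sigma>"
    unfolding possible_arrangement_def
    by (rule exI[of _ "\<lambda>j. map ff (st j)"]) (simp add: st state_ff fits_ff)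
qed

end
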